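(* Let $V$ be an infinite-dimensional vector space over a field $\mathbb{F}$. Let $a,b,c$ be quadratic endomorphisms of $V$, and let $\lambda\in\mathbb{F}$ and $w\in\mathrm{End}(V)$ be such that $\lambda\,\mathrm{id}_V+w=a+b+c$ and $\operatorname{rk}w<\dim V$. Let $W$ be a linear subspace of $V$ with $\operatorname{im}w\subset W$ and $\dim W<\dim V$. Then there exists a linear subspace $\overline{W}$ of $V$ with $W\subset\overline{W}$, $\dim\overline{W}<\dim V$, and $\overline{W}$ stable under $a$, $b$ and $c$. Moreover, if $W$ is finite-dimensional then $\overline{W}$ can be chosen finite-dimensional.
   Context: An endomorphism $e$ of $V$ is quadratic if $p(e)=0$ for some polynomial $p\in\mathbb{F}[t]$ of degree $2$. *)

theory Defs
  imports Main "HOL-Computational_Algebra.Polynomial"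
begin

text \<open>Vector spaces are given by a scalar multiplication \<open>scale\<close> satisfying
  the library locale \<open>vector_space\<close>; endomorphisms are maps \<open>f\<close> with
  \<open>linear scale scale f\<close>.\<close>

definition poly_endo :: "('a::field \<Rightarrow> 'v::ab_group_add \<Rightarrow> 'v) \<Rightarrow> 'a poly \<Rightarrow> ('v \<Rightarrow> 'v) \<Rightarrow> 'v \<Rightarrow> 'v" where
  "poly_endo scale p e = (\<lambda>v. \<Sum>i\<le>degree p. scale (coeff p i) ((e ^^ i) v))"

definition quadratic_endo :: "('a::field \<Rightarrow> 'v::ab_group_add \<Rightarrow> 'v) \<Rightarrow> ('v \<Rightarrow> 'v) \<Rightarrow> bool" where
  "quadratic_endo scale e \<longleftrightarrow> (\<exists>p::'a poly. degree p = 2 \<and> (\<forall>v. poly_endo scale p e v = 0))"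

definition is_basis_of :: "('a::field \<Rightarrow> 'v::ab_group_add \<Rightarrow> 'v) \<Rightarrow> 'v set \<Rightarrow> 'v set \<Rightarrow> bool" where
  "is_basis_of scale B W \<longleftrightarrow> B \<subseteq> W \<and> \<not> module.dependent scale B \<and> module.span scale B = W"

definition cdim :: "('a::field \<Rightarrow> 'v::ab_group_add \<Rightarrow> 'v) \<Rightarrow> 'v set \<Rightarrow> 'v rel" where
  "cdim scale W = card_of (SOME B. is_basis_of scale B W)"

definition fin_dim :: "('a::field \<Rightarrow> 'v::ab_group_add \<Rightarrow> 'v) \<Rightarrow> 'v set \<Rightarrow> bool" where
  "fin_dim scale W \<longleftrightarrow> (\<exists>B. finite B \<and> module.span scale B = W)"

end

theory Submission
  imports Defs
begin


context vector_space begin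
lemma quad_rel:
  assumes "quadratic_endo scale e"
  shows "\<exists>\<alpha> \<beta>. \<forall>v. e (e v) = \<alpha> *s v + \<beta> *s e v"
proof -
  obtain p :: "'a poly" where dp: "degree p = 2" and z: "\<forall>v. poly_endo scale p e v = 0"
    using assms unfolding quadratic_endo_def by blast
  define c0 where "c0 = coeff p 0"
  define c1 where "c1 = coeff p 1"
  define c2 where "c2 = coeff p 2"
  have c2: "c2 \<noteq> 0" unfolding c2_def using dp
    by (metis leading_coeff_0_iff degree_0 zero_neq_numeral)
  have eq: "c0 *s v + c1 *s e v + c2 *s e (e v) = 0" for v
    using z[rule_format, of v] dp
    by (simp add: poly_endo_def numeral_2_eq_2 c0_def c1_def c2_def atMost_Suc add.assoc add.commute add.left_commute)
  show ?thesis
  proof (intro exI allI)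
    fix v
    have "c2 *s e (e v) = - (c0 *s v) - c1 *s e v" using eq[of v]
      by (metis add.commute add_diff_cancel_left' diff_0 diff_diff_eq)
    hence "inverse c2 *s (c2 *s e (e v)) = inverse c2 *s (- (c0 *s v) - c1 *s e v)" by simp
    thus "e (e v) = (- c0 / c2) *s v + (- c1 / c2) *s e v"
      using c2 by (simp add: scale_right_diff_distrib scale_minus_right divide_inverse mult.commute)
  qed
qed
end


context vector_space begin
lemma lin_props:
  assumes "Vector_Spaces.linear scale scale f"
  shows "f (x + y) = f x + f y" "f (r *s x) = r *s f x" "f (x - y) = f x - f y"
proof -
  interpret m: module_hom scale scale f using assms by (simp add: linear_iff_module_hom)
  show "f (x + y) = f x + f y" "f (r *s x) = r *s f x" "f (x - y) = f x - f y"
    by (simp_all add: m.add m.scale m.diff)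
qed

lemma key_rel:
  assumes la: "Vector_Spaces.linear scale scale a" and lb: "Vector_Spaces.linear scale scale b"
    and lc: "Vector_Spaces.linear scale scale c"
    and qa: "\<And>v. a (a v) = \<alpha>a *s v + \<beta>a *s a v"
    and qb: "\<And>v. b (b v) = \<alpha>b *s v + \<beta>b *s b v"
    and qc: "\<And>v. c (c v) = \<alpha>c *s v + \<beta>c *s c v"
    and sum: "\<And>v. lam *s v + w v = a v + b v + c v"
    and X: "subspace X" and wX: "\<And>v. w v \<in> X" "\<And>v. a (w v) \<in> X" "\<And>v. b (w v) \<in> X"
    and y: "y \<in> X" "a y \<in> X" "b y \<in> X"
  shows "a (b y) + b (a y) \<in> X"
proof -
  note sX = subspace_add[OF X] subspace_scale[OF X] subspace_diff[OF X]
  have cy: "c y = lam *s y + w y - a y - b y" using sum[of y] by (simp add: algebra_simps)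
  have e1: "c y \<in> X" unfolding cy using y wX by (intro sX) auto
  have e2': "a (c y) + b (c y) = lam *s c y + w (c y) - c (c y)" using sum[of "c y"] by (simp add: algebra_simps)
  have e2: "a (c y) + b (c y) \<in> X" unfolding e2' qc using e1 wX y by (intro sX) auto
  have s: "a y + b y = lam *s y + w y - c y" using sum[of y] by (simp add: algebra_simps)
  have ea: "a (a y + b y) = lam *s a y + a (w y) - a (c y)" unfolding s by (simp add: lin_props[OF la])
  have eb: "b (a y + b y) = lam *s b y + b (w y) - b (c y)" unfolding s by (simp add: lin_props[OF lb])
  have e3': "a (a y + b y) + b (a y + b y) = lam *s a y + lam *s b y + (a (w y) + b (w y)) - (a (c y) + b (c y))"
    unfolding ea eb by (simp add: algebra_simps)
  have e3: "a (a y + b y) + b (a y + b y) \<in> X" unfolding e3' apply (rule subspace_diff[OF X _ e2]) using wX y by (intro sX; auto)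
  have "a (b y) + b (a y) = (a (a y + b y) + b (a y + b y)) - a (a y) - b (b y)"
    using lin_props[OF la] lin_props[OF lb] by (simp add: algebra_simps)
  also have "\<dots> \<in> X" unfolding qa qb apply (rule subspace_diff[OF X subspace_diff[OF X e3]]) using y by (intro sX; auto)+
  finally show ?thesis .
qed
end


context vector_space begin
lemma stab:
  assumes la: "Vector_Spaces.linear scale scale a" and lb: "Vector_Spaces.linear scale scale b"
    and lc: "Vector_Spaces.linear scale scale c"
    and qa: "\<And>v. a (a v) = \<alpha>a *s v + \<beta>a *s a v"
    and qb: "\<And>v. b (b v) = \<alpha>b *s v + \<beta>b *s b v"
    and qc: "\<And>v. c (c v) = \<alpha>c *s v + \<beta>c *s c v"
    and sum: "\<And>v. lam *s v + w v = a v + b v + c v"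
    and imw: "range w \<subseteq> W"
  shows "a ` span (W \<union> a ` W \<union> b ` W \<union> (\<lambda>x. a (b x)) ` W \<union> (\<lambda>x. b (a x)) ` W)
     \<subseteq> span (W \<union> a ` W \<union> b ` W \<union> (\<lambda>x. a (b x)) ` W \<union> (\<lambda>x. b (a x)) ` W)"
    (is "a ` span ?S \<subseteq> span ?S")
proof -
  let ?X = "span ?S"
  have X: "subspace ?X" by simp
  note sX = subspace_add[OF X] subspace_scale[OF X] subspace_diff[OF X]
  have inS: "x \<in> W \<Longrightarrow> x \<in> ?X" "x \<in> W \<Longrightarrow> a x \<in> ?X" "x \<in> W \<Longrightarrow> b x \<in> ?X"
    "x \<in> W \<Longrightarrow> a (b x) \<in> ?X" "x \<in> W \<Longrightarrow> b (a x) \<in> ?X" for x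
    by (auto intro: span_base)
  have wX: "w v \<in> ?X" "a (w v) \<in> ?X" "b (w v) \<in> ?X" for v
    using imw inS by auto
  have "a ` ?S \<subseteq> ?X"
  proof safe
    fix x assume x: "x \<in> W"
    show "a x \<in> ?X" using inS x by auto
    show "a (a x) \<in> ?X" unfolding qa using inS x by (intro sX) auto
    show "a (b x) \<in> ?X" using inS x by auto
    show "a (a (b x)) \<in> ?X" unfolding qa using inS x by (intro sX) auto
    have k: "a (b (a x)) + b (a (a x)) \<in> ?X"
      by (rule key_rel[OF la lb lc qa qb qc sum X wX]) (use inS x in \<open>auto simp: qa intro!: sX\<close>)
    have "b (a (a x)) \<in> ?X" unfolding qa lin_props[OF lb] using inS x by (intro sX) auto
    hence "(a (b (a x)) + b (a (a x))) - b (a (a x)) \<in> ?X" by (rule subspace_diff[OF X k])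
    thus "a (b (a x)) \<in> ?X" by simp
  qed
  hence "span (a ` ?S) \<subseteq> ?X" by (simp add: span_minimal)
  moreover have "span (a ` ?S) = a ` ?X"
    by (rule vector_space_pair.linear_span_image[OF _ la]) (simp add: vector_space_pair_def vector_space_axioms)
  ultimately show ?thesis by simp
qed
end



lemma fin_less_inf: "finite A \<Longrightarrow> \<not> finite B \<Longrightarrow> (card_of A, card_of B) \<in> ordLess"
  using finite_ordLess_infinite[OF card_of_Well_order card_of_Well_order] by (simp add: Field_card_of)

context vector_space begin

lemma span_fin_subset: "x \<in> span T \<Longrightarrow> \<exists>F. finite F \<and> F \<subseteq> T \<and> x \<in> span F"
  unfolding span_explicit[of T]
proof safe
  fix t r assume "finite t" "t \<subseteq> T"
  moreover have "(\<Sum>a\<in>t. r a *s a) \<in> span t" by (intro span_sum span_scale span_base)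
  ultimately show "\<exists>F. finite F \<and> F \<subseteq> T \<and> (\<Sum>a\<in>t. r a *s a) \<in> span F" by blast
qed

lemma basis_ex: "subspace X \<Longrightarrow> \<exists>B. is_basis_of scale B X"
  unfolding is_basis_of_def
  by (metis basis_exists span_minimal subset_antisym)

lemma card_bound_inf:
  assumes ind: "independent BU" and BU: "BU \<subseteq> span S" and S: "S \<subseteq> span BU"
    and inf: "\<not> finite BW" and SB: "(card_of S, card_of BW) \<in> ordLeq"
  shows "(card_of BU, card_of BW) \<in> ordLeq"
proof -
  have "\<forall>s\<in>S. \<exists>F. finite F \<and> F \<subseteq> BU \<and> s \<in> span F" using S span_fin_subset by blast
  then obtain F where F: "\<And>s. s \<in> S \<Longrightarrow> finite (F s) \<and> F s \<subseteq> BU \<and> s \<in> span (F s)" by metis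
  have sub: "BU \<subseteq> (\<Union>s\<in>S. F s)"
  proof
    fix x assume x: "x \<in> BU"
    show "x \<in> (\<Union>s\<in>S. F s)"
    proof (rule ccontr)
      assume nx: "x \<notin> (\<Union>s\<in>S. F s)"
      have "S \<subseteq> span (\<Union>s\<in>S. F s)"
        using F by (meson UN_upper span_mono subset_iff)
      hence "span S \<subseteq> span (\<Union>s\<in>S. F s)" by (simp add: span_minimal)
      also have "\<dots> \<subseteq> span (BU - {x})" using F nx by (intro span_mono) auto
      finally have "x \<in> span (BU - {x})" using x BU by auto
      thus False using ind x dependent_def by blast
    qed
  qed
  have "(card_of (\<Union>s\<in>S. F s), card_of BW) \<in> ordLeq"
    by (rule card_of_UNION_ordLeq_infinite[OF inf SB])
       (use F inf fin_less_inf ordLess_imp_ordLeq in blast)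
  thus ?thesis using card_of_mono1[OF sub] ordLeq_transitive by blast
qed
end



definition SS :: "('v \<Rightarrow> 'v) \<Rightarrow> ('v \<Rightarrow> 'v) \<Rightarrow> 'v set \<Rightarrow> 'v set" where
  "SS a b X = X \<union> a ` X \<union> b ` X \<union> (\<lambda>x. a (b x)) ` X \<union> (\<lambda>x. b (a x)) ` X"

lemma SS_UN: "SS a b X = (\<Union>f\<in>{id, a, b, a \<circ> b, b \<circ> a}. f ` X)"
  unfolding SS_def by auto

lemma SS_swap: "SS b a X = SS a b X"
  unfolding SS_def by auto

lemma SS_mono: "X \<subseteq> Y \<Longrightarrow> SS a b X \<subseteq> SS a b Y"
  unfolding SS_def by auto

lemma SS_finite: "finite X \<Longrightarrow> finite (SS a b X)"
  unfolding SS_def by auto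

context vector_space begin
lemma lin_span_image: "Vector_Spaces.linear scale scale f \<Longrightarrow> f ` span B = span (f ` B)"
  by (rule vector_space_pair.linear_span_image[symmetric]) (simp_all add: vector_space_pair_def vector_space_axioms)

lemma span_SS:
  assumes la: "Vector_Spaces.linear scale scale a" and lb: "Vector_Spaces.linear scale scale b"
  shows "span (SS a b (span B)) = span (SS a b B)"
proof -
  have lab: "Vector_Spaces.linear scale scale (\<lambda>x. a (b x))"
    using Vector_Spaces.linear_compose[OF lb la] by (simp add: o_def)
  have lba: "Vector_Spaces.linear scale scale (\<lambda>x. b (a x))"
    using Vector_Spaces.linear_compose[OF la lb] by (simp add: o_def)
  have "SS a b (span B) \<subseteq> span (SS a b B)"
    unfolding SS_def lin_span_image[OF la] lin_span_image[OF lb] lin_span_image[OF lab]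
      lin_span_image[OF lba]
    by (intro Un_least span_mono) auto
  moreover have "SS a b B \<subseteq> span (SS a b (span B))"
    using SS_mono[OF span_superset[of B], of a b] span_superset[of "SS a b (span B)"] by blast
  ultimately show ?thesis by (simp add: span_eq)
qed
end

theorem lemma1:
  fixes scale :: "'a::field \<Rightarrow> 'v::ab_group_add \<Rightarrow> 'v"
    and a b c w :: "'v \<Rightarrow> 'v" and lam :: 'a and W :: "'v set"
  assumes vs: "vector_space scale"
    and infdim: "\<not> fin_dim scale UNIV"
    and lin_a: "Vector_Spaces.linear scale scale a" and lin_b: "Vector_Spaces.linear scale scale b"
    and lin_c: "Vector_Spaces.linear scale scale c" and lin_w: "Vector_Spaces.linear scale scale w"
    and qa: "quadratic_endo scale a" and qb: "quadratic_endo scale b"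
    and qc: "quadratic_endo scale c"
    and sum: "\<And>v. scale lam v + w v = a v + b v + c v"
    and rk: "(cdim scale (range w), cdim scale UNIV) \<in> ordLess"
    and subW: "module.subspace scale W"
    and imw: "range w \<subseteq> W"
    and dimW: "(cdim scale W, cdim scale UNIV) \<in> ordLess"
  shows "\<exists>W'. module.subspace scale W' \<and> W \<subseteq> W' \<and> (cdim scale W', cdim scale UNIV) \<in> ordLess
           \<and> a ` W' \<subseteq> W' \<and> b ` W' \<subseteq> W' \<and> c ` W' \<subseteq> W'
           \<and> (fin_dim scale W \<longrightarrow> fin_dim scale W')"
proof -
  interpret V: vector_space scale by (rule vs)
  obtain \<alpha>a \<beta>a where qa': "\<And>v. a (a v) = scale \<alpha>a v + scale \<beta>a (a v)" using V.quad_rel[OF qa] by blast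
  obtain \<alpha>b \<beta>b where qb': "\<And>v. b (b v) = scale \<alpha>b v + scale \<beta>b (b v)" using V.quad_rel[OF qb] by blast
  obtain \<alpha>c \<beta>c where qc': "\<And>v. c (c v) = scale \<alpha>c v + scale \<beta>c (c v)" using V.quad_rel[OF qc] by blast
  have sum': "\<And>v. scale lam v + w v = b v + a v + c v" using sum by (simp add: add.commute)
  define U where "U = V.span (SS a b W)"
  have subU: "V.subspace U" unfolding U_def by simp
  have "W \<subseteq> SS a b W" by (auto simp: SS_def)
  hence WU: "W \<subseteq> U" unfolding U_def using V.span_superset by blast
  have aU: "a ` U \<subseteq> U" unfolding U_def SS_def
    by (rule V.stab[OF lin_a lin_b lin_c qa' qb' qc' sum imw])
  have "b ` V.span (SS b a W) \<subseteq> V.span (SS b a W)"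
    unfolding SS_def by (rule V.stab[OF lin_b lin_a lin_c qb' qa' qc' sum' imw])
  hence bU: "b ` U \<subseteq> U" unfolding U_def SS_swap[of b a W] .
  have cU: "c ` U \<subseteq> U"
  proof safe
    fix u assume u: "u \<in> U"
    have wu: "w u \<in> U" using imw WU by blast
    have "c u = scale lam u + w u - a u - b u" using sum[of u] by (simp add: algebra_simps)
    also have "\<dots> \<in> U" using u aU bU wu
      by (intro V.subspace_diff[OF subU] V.subspace_add[OF subU] V.subspace_scale[OF subU]) auto
    finally show "c u \<in> U" .
  qed
  have finU: "fin_dim scale U" if "fin_dim scale W"
  proof -
    have "\<exists>B. finite B \<and> V.span B = W" using that by (simp only: fin_dim_def)
    then obtain B where B: "finite B" "V.span B = W" by (elim exE conjE)
    have U: "V.span (SS a b B) = U" unfolding U_def B(2)[symmetric] by (rule V.span_SS[OF lin_a lin_b, symmetric])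
    show ?thesis unfolding fin_dim_def by (rule exI[of _ "SS a b B"], rule conjI[OF SS_finite[OF B(1)] U])
  qed
  define BW where "BW = (SOME B. is_basis_of scale B W)"
  define BU where "BU = (SOME B. is_basis_of scale B U)"
  define BV where "BV = (SOME B. is_basis_of scale B (UNIV::'v set))"
  have BW: "is_basis_of scale BW W" unfolding BW_def by (rule someI_ex, rule V.basis_ex[OF subW])
  have BU: "is_basis_of scale BU U" unfolding BU_def by (rule someI_ex, rule V.basis_ex[OF subU])
  have BV: "is_basis_of scale BV UNIV" unfolding BV_def by (rule someI_ex, rule V.basis_ex) simp
  have cdW: "cdim scale W = card_of BW" and cdU: "cdim scale U = card_of BU"
    and cdV: "cdim scale UNIV = card_of BV" unfolding cdim_def BW_def BU_def BV_def by simp_all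
  have "V.span BV = UNIV" using BV unfolding is_basis_of_def by simp
  hence infBV: "\<not> finite BV" using infdim unfolding fin_dim_def by blast
  have BU1: "BU \<subseteq> U" and BU2: "V.independent BU" and BU3: "V.span BU = U"
    using BU unfolding is_basis_of_def by simp_all
  have BW3: "V.span BW = W" using BW unfolding is_basis_of_def by simp
  have UB: "U = V.span (SS a b BW)" unfolding U_def BW3[symmetric] by (rule V.span_SS[OF lin_a lin_b])
  have less: "(card_of BU, card_of BV) \<in> ordLess"
  proof (cases "finite BW")
    case True
    have "finite BU" using V.independent_span_bound[OF SS_finite[OF True] BU2 BU1[unfolded UB]] by simp
    thus ?thesis using fin_less_inf infBV by blast
  next
    case False
    have "(card_of (SS a b BW), card_of BW) \<in> ordLeq"
      unfolding SS_UN
    proof (rule card_of_UNION_ordLeq_infinite[OF False])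
      show "(card_of {id, a, b, a \<circ> b, b \<circ> a}, card_of BW) \<in> ordLeq"
        by (rule ordLess_imp_ordLeq, rule fin_less_inf[OF _ False]) simp
      show "\<forall>f\<in>{id, a, b, a \<circ> b, b \<circ> a}. (card_of (f ` BW), card_of BW) \<in> ordLeq"
        using card_of_image by blast
    qed
    note SB = this
    have BUS: "BU \<subseteq> V.span (SS a b BW)" using BU1 unfolding UB .
    have SBU: "SS a b BW \<subseteq> V.span BU" unfolding BU3 UB by (rule V.span_superset)
    have "(card_of BU, card_of BW) \<in> ordLeq"
      by (rule V.card_bound_inf[OF BU2 BUS SBU False SB])
    moreover have "(card_of BW, card_of BV) \<in> ordLess" using dimW unfolding cdW cdV .
    ultimately show ?thesis by (rule ordLeq_ordLess_trans)
  qed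
  have lessU: "(cdim scale U, cdim scale UNIV) \<in> ordLess" unfolding cdU cdV by (rule less)
  show ?thesis
    apply (rule exI[of _ U])
    apply (intro conjI impI)
          apply (rule subU)
         apply (rule WU)
        apply (rule lessU)
       apply (rule aU)
      apply (rule bU)
     apply (rule cU)
    apply (erule finU)
    done
qed


end
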